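(* Let $n\ge3$ and define $c\in\mathbb{Z}_{\ge0}^n$ by $c_k=n-1$ for $k\le n-3$ and $c_k=1$ for $k\in\{n-2,n-1,n\}$. Then $c\in\mathrm{StoRec}_n\setminus\mathrm{PSR}_n(n-3)$.
   Context: $K_n^0$ is the complete graph on vertex set $\{0,1,\dots,n\}$ with sink $0$; every vertex has degree $n$. A configuration is $c\in\mathbb{Z}_{\ge0}^n$, stable if $c_i\le n-1$ for all $i$; $c^{\max}=(n-1,\dots,n-1)$. A deterministic toppling of an unstable vertex $i$ sends one grain to each neighbour (grains sent to the sink disappear). A stochastic toppling (parameter $p\in(0,1)$) of an unstable vertex $i$ sends, independently for each incident edge, one grain along it with probability $p$, else keeps it. For $k\in\{0,\dots,n\}$, the $k$-partial SSM on $K_n^0$ is the model in which vertices $1,\dots,k$ topple stochastically and vertices $k+1,\dots,n$ topple deterministically; its Markov chain on stable configurations adds a grain at vertex $i$ with probability $\mu_i>0$ and then stabilises. $\mathrm{PSR}_n(k)$ is its set of recurrent states; equivalently, the stable configurations reachable from $c^{\max}$ by a finite sequence of grain additions and topplings of unstable vertices in which vertices $k+1,\dots,n$ topple deterministically and vertices $1,\dots,k$ send one grain along each edge of an arbitrary subset of their incident edges. $\mathrm{StoRec}_n=\mathrm{PSR}_n(n)$ is the set of recurrent states of the SSM (all vertices topple stochastically). *)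

theory Defs
  imports Main
begin

text \<open>Configurations on K_n^0: functions nat => nat; vertices 1..n are the
non-sink vertices, 0 is the sink; values outside 1..n are kept at 0.\<close>

definition cmax :: "nat \<Rightarrow> (nat \<Rightarrow> nat)" where
  "cmax n = (\<lambda>j. if j \<in> {1..n} then n - 1 else 0)"

definition stable :: "nat \<Rightarrow> (nat \<Rightarrow> nat) \<Rightarrow> bool" where
  "stable n c \<longleftrightarrow> (\<forall>j\<in>{1..n}. c j \<le> n - 1)"

definition nbrs :: "nat \<Rightarrow> nat \<Rightarrow> nat set" where
  "nbrs n i = {0..n} - {i}"

definition topple :: "(nat \<Rightarrow> nat) \<Rightarrow> nat \<Rightarrow> nat set \<Rightarrow> (nat \<Rightarrow> nat)" where
  "topple c i S = (\<lambda>j. if j = i then c i - card S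
                        else if j \<in> S \<and> j \<noteq> 0 then c j + 1 else c j)"

text \<open>Reachability from c^max in the k-partial model: vertices 1..k topple
along an arbitrary subset of incident edges, vertices k+1..n deterministically.\<close>
inductive reach :: "nat \<Rightarrow> nat \<Rightarrow> (nat \<Rightarrow> nat) \<Rightarrow> bool" for n k where
  start: "reach n k (cmax n)"
| add: "reach n k c \<Longrightarrow> i \<in> {1..n} \<Longrightarrow> reach n k (c(i := c i + 1))"
| top: "reach n k c \<Longrightarrow> i \<in> {1..n} \<Longrightarrow> n \<le> c i \<Longrightarrow> S \<subseteq> nbrs n i
        \<Longrightarrow> (k < i \<Longrightarrow> S = nbrs n i) \<Longrightarrow> reach n k (topple c i S)"

definition PSR :: "nat \<Rightarrow> nat \<Rightarrow> (nat \<Rightarrow> nat) set" where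
  "PSR n k = {c. reach n k c \<and> stable n c}"

definition StoRec :: "nat \<Rightarrow> (nat \<Rightarrow> nat) set" where
  "StoRec n = PSR n n"

end

theory Submission
  imports Defs
begin

definition DD :: "nat \<Rightarrow> nat set" where "DD n = {n-2, n-1, n}"
definition Inv :: "nat \<Rightarrow> (nat \<Rightarrow> nat) \<Rightarrow> bool" where
  "Inv n c \<longleftrightarrow> (\<forall>A\<subseteq>DD n. A \<noteq> {} \<longrightarrow> (\<exists>v\<in>A. card A - 1 \<le> c v))"

lemma card_DD: "n \<ge> 3 \<Longrightarrow> card (DD n) = 3"
  unfolding DD_def by (simp add: card_insert_if; linarith)

lemma inv_reach:
  assumes "reach n (n-3) c" "n \<ge> 3"
  shows "Inv n c"
  using assms(1)
proof (induction rule: reach.induct)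
  case start
  show ?case unfolding Inv_def
  proof (intro allI impI)
    fix A assume A: "A \<subseteq> DD n" "A \<noteq> {}"
    then obtain v where v: "v \<in> A" by blast
    have "card A \<le> 3" using card_mono[OF _ A(1)] card_DD[OF assms(2)] unfolding DD_def by simp
    moreover have "v \<in> {1..n}" using v A assms(2) unfolding DD_def by auto
    ultimately show "\<exists>v\<in>A. card A - 1 \<le> cmax n v" using v assms(2) unfolding cmax_def by auto
  qed
next
  case (add c i)
  show ?case unfolding Inv_def
  proof (intro allI impI)
    fix A assume A: "A \<subseteq> DD n" "A \<noteq> {}"
    then obtain v where "v \<in> A" "card A - 1 \<le> c v" using add.IH unfolding Inv_def by blast
    then show "\<exists>v\<in>A. card A - 1 \<le> (c(i := c i + 1)) v" by (intro bexI[of _ v]) auto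
  qed
next
  case (top c i S)
  show ?case unfolding Inv_def
  proof (intro allI impI)
    fix A assume A: "A \<subseteq> DD n" "A \<noteq> {}"
    have finA: "finite A" using A(1) finite_subset unfolding DD_def by blast
    show "\<exists>v\<in>A. card A - 1 \<le> topple c i S v"
    proof (cases "i \<in> DD n")
      case False
      obtain v where v: "v \<in> A" "card A - 1 \<le> c v" using top.IH A unfolding Inv_def by blast
      have "v \<noteq> i" using v A False by auto
      then have "c v \<le> topple c i S v" unfolding topple_def by auto
      then show ?thesis using v by force
    next
      case True
      have iD: "n - 3 < i" using True assms(2) unfolding DD_def by auto
      have SS: "S = nbrs n i" using top.hyps(5)[OF iD] .
      have up: "topple c i S j = c j + 1" if "j \<in> DD n" "j \<noteq> i" for j
        using that assms(2) unfolding topple_def SS nbrs_def DD_def by auto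
      obtain v where v: "v \<in> A" "card A - 1 \<le> c v" using top.IH A unfolding Inv_def by blast
      show ?thesis
      proof (cases "v = i")
        case False
        then show ?thesis using v up[of v] A by (intro bexI[of _ v]) auto
      next
        case vi: True
        show ?thesis
        proof (cases "A = {i}")
          case True then show ?thesis by simp
        next
          case False
          let ?A = "A - {i}"
          have ne: "?A \<noteq> {}" using False A(2) v vi by blast
          obtain w where w: "w \<in> ?A" "card ?A - 1 \<le> c w"
            using top.IH ne A(1) unfolding Inv_def by (meson Diff_subset order_trans)
          have "card ?A = card A - 1" using finA v vi by simp
          then have "card A - 1 \<le> c w + 1" using w ne finA by linarith
          then show ?thesis using w up[of w] A by (intro bexI[of _ w]) auto
        qed
      qed
    qed
  qed
qed

definition conf :: "nat \<Rightarrow> nat \<Rightarrow> nat \<Rightarrow> nat \<Rightarrow> nat \<Rightarrow> nat" where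
  "conf n x y z = (\<lambda>j. if j \<in> {1..n-3} then n-1 else if j = n-2 then x else if j = n-1 then y
      else if j = n then z else 0)"
definition confO :: "nat \<Rightarrow> nat \<Rightarrow> nat \<Rightarrow> nat \<Rightarrow> nat \<Rightarrow> nat" where
  "confO n x y z = (\<lambda>j. if j \<in> {1..n-3} then n else conf n x y z j)"

lemma dump_gen:
  assumes "finite T" "T \<subseteq> {1..n}" "reach n n (\<lambda>j. if j \<in> T then n else g j)" "\<forall>j\<in>T. g j = n - 1"
  shows "reach n n g"
  using assms
proof (induction T rule: finite_induct)
  case empty then show ?case by simp
next
  case (insert t T)
  let ?c = "(\<lambda>j. if j \<in> insert t T then n else g j)"
  have "reach n n (topple ?c t {0})"
    by (rule reach.top[OF insert.prems(2)]) (use insert.prems(1) in \<open>auto simp: nbrs_def\<close>)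
  moreover have "topple ?c t {0} = (\<lambda>j. if j \<in> T then n else g j)"
    using insert.hyps(2) insert.prems(3) unfolding topple_def by (auto simp: fun_eq_iff)
  ultimately show ?case using insert by auto
qed

lemma dump:
  assumes "n \<ge> 3" "reach n n (confO n x y z)"
  shows "reach n n (conf n x y z)"
proof -
  have "confO n x y z = (\<lambda>j. if j \<in> {1..n-3} then n else conf n x y z j)"
    unfolding confO_def by simp
  then show ?thesis using dump_gen[of "{1..n-3}" n "conf n x y z"] assms unfolding conf_def by auto
qed

lemma card_nbrs: "i \<le> n \<Longrightarrow> card (nbrs n i) = n"
  unfolding nbrs_def by simp

lemma stoch:
  assumes n: "n \<ge> 3"
  shows "reach n n (conf n 1 1 1)"
proof -
  have s0: "reach n n (conf n (n-1) (n-1) (n-1))"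
  proof -
    have "cmax n = conf n (n-1) (n-1) (n-1)" unfolding cmax_def conf_def using n by (auto simp: fun_eq_iff)
    then show ?thesis using reach.start by metis
  qed
  have s1: "reach n n (conf n n (n-1) (n-1))"
  proof -
    have "reach n n ((conf n (n-1) (n-1) (n-1))(n-2 := conf n (n-1) (n-1) (n-1) (n-2) + 1))"
      by (rule reach.add[OF s0]) (use n in auto)
    moreover have "(conf n (n-1) (n-1) (n-1))(n-2 := conf n (n-1) (n-1) (n-1) (n-2) + 1) = conf n n (n-1) (n-1)"
      unfolding conf_def using n by (auto simp: fun_eq_iff)
    ultimately show ?thesis by simp
  qed
  have s2: "reach n n (conf n 0 n n)"
  proof -
    have "reach n n (topple (conf n n (n-1) (n-1)) (n-2) (nbrs n (n-2)))"
      by (rule reach.top[OF s1]) (use n in \<open>auto simp: conf_def\<close>)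
    moreover have "topple (conf n n (n-1) (n-1)) (n-2) (nbrs n (n-2)) = confO n 0 n n"
      unfolding topple_def card_nbrs[of "n-2" n, OF diff_le_self] using n
      by (auto simp: fun_eq_iff conf_def confO_def nbrs_def)
    ultimately show ?thesis using dump n by metis
  qed
  have s3: "reach n n (conf n 1 0 (n+1))"
  proof -
    have "reach n n (topple (conf n 0 n n) (n-1) (nbrs n (n-1)))"
      by (rule reach.top[OF s2]) (use n in \<open>auto simp: conf_def\<close>)
    moreover have "topple (conf n 0 n n) (n-1) (nbrs n (n-1)) = confO n 1 0 (n+1)"
      unfolding topple_def card_nbrs[of "n-1" n, OF diff_le_self] using n
      by (auto simp: fun_eq_iff conf_def confO_def nbrs_def)
    ultimately show ?thesis using dump n by metis
  qed
  have s4: "reach n n (conf n 1 0 n)"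
  proof -
    have "reach n n (topple (conf n 1 0 (n+1)) n {0})"
      by (rule reach.top[OF s3]) (use n in \<open>auto simp: conf_def nbrs_def\<close>)
    moreover have "topple (conf n 1 0 (n+1)) n {0} = conf n 1 0 n"
      unfolding topple_def using n
      by (auto simp: fun_eq_iff conf_def)
    ultimately show ?thesis by metis
  qed
  have s5: "reach n n (conf n 1 1 1)"
  proof -
    have cS: "card (nbrs n n - {n-2}) = n - 1"
      using card_nbrs[of n n] n by (simp add: nbrs_def)
    have "reach n n (topple (conf n 1 0 n) n (nbrs n n - {n-2}))"
      by (rule reach.top[OF s4]) (use n in \<open>auto simp: conf_def nbrs_def\<close>)
    moreover have "topple (conf n 1 0 n) n (nbrs n n - {n-2}) = confO n 1 1 1"
      unfolding topple_def cS using n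
      by (auto simp: fun_eq_iff conf_def confO_def nbrs_def)
    ultimately show ?thesis using dump n by metis
  qed
  then show ?thesis .
qed

theorem proposition5p3:
  fixes n :: nat
  assumes "n \<ge> 3"
  shows "(\<lambda>k. if k \<in> {1..n-3} then n - 1 else if k \<in> {n-2..n} then 1 else 0)
           \<in> StoRec n - PSR n (n - 3)"
proof -
  let ?c = "(\<lambda>k. if k \<in> {1..n-3} then n - 1 else if k \<in> {n-2..n} then 1 else (0::nat))"
  have eq: "?c = conf n 1 1 1" unfolding conf_def using assms by (auto simp: fun_eq_iff)
  have st: "stable n ?c" unfolding stable_def using assms by auto
  have "?c \<in> StoRec n" unfolding StoRec_def PSR_def using stoch[OF assms] eq st by simp
  moreover have "\<not> reach n (n-3) ?c"
  proof
    assume "reach n (n-3) ?c"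
    then have I: "Inv n ?c" using inv_reach assms by blast
    have "DD n \<subseteq> DD n" "DD n \<noteq> {}" unfolding DD_def by auto
    then obtain v where "v \<in> DD n" "card (DD n) - 1 \<le> ?c v" using I unfolding Inv_def by blast
    then show False using card_DD[OF assms] assms unfolding DD_def by (auto split: if_splits)
  qed
  ultimately show ?thesis unfolding PSR_def by simp
qed

end
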